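(* Let $q$ be a prime power and let $\mathbf{G}\in\mathbb{F}_q^{k\times n}$ be a generator matrix of a linear $[n,k]_q$ code. Consider a coded storage system with files $f_1,\dots,f_k$ in which, for each $i\in[k]$, file $f_i$ has a given list $\mathcal{R}_i=(R_{i,1},\dots,R_{i,t_i})$ of $t_i\ge1$ recovery sets, each of size $1$ or $2$, and all servers have service rate $1$. Let $G$ be the graph representation of the code. Then $m(G)\le\lambda^\star(\mathbf{G})=m_f(G)\le v(G)$.
   Context: Let $\mathbf{g}_1,\dots,\mathbf{g}_n$ be the columns of $\mathbf{G}$ and $\mathbf{e}_i$ the $i$-th unit vector. A set $R\subseteq[n]$ is a recovery set for file $f_i$ if there exist nonzero $\alpha_j\in\mathbb{F}_q$ ($j\in R$) with $\sum_{j\in R}\alpha_j\mathbf{g}_j=\mathbf{e}_i$. The service rate region $\mathcal{S}(\mathbf{G})$ is the set of $\boldsymbol{\lambda}\in\mathbb{R}^k$ for which there exist real $\lambda_{i,j}\ge0$ with $\sum_{j=1}^{t_i}\lambda_{i,j}=\lambda_i$ for all $i$ and $\sum_{i=1}^k\sum_{j\in[t_i]:\,l\in R_{i,j}}\lambda_{i,j}\le1$ for every server $l\in[n]$. The service capacity is $\lambda^\star(\mathbf{G})=\max\{\sum_{i=1}^k\lambda_i:\boldsymbol{\lambda}\in\mathcal{S}(\mathbf{G})\}$. The graph representation $G$ is the (multi)graph with vertex set $[n]$ plus one new dummy vertex $d_{i,j}$ for each recovery set $R_{i,j}$ of size 1, and edges indexed by $(i,j)$: if $R_{i,j}=\{a,b\}$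 the edge joins $a$ and $b$; if $R_{i,j}=\{r\}$ it joins $r$ and $d_{i,j}$. $m(G)$ is the maximum number of pairwise non-adjacent edges (matching number); $m_f(G)$ is the maximum of $\sum_e x_e$ over assignments $x_e\in[0,1]$ with the sum over edges incident to each vertex at most 1 (fractional matching number); $v(G)$ is the minimum size of a vertex set meeting every edge (vertex cover number). *)

theory Defs
  imports Main "HOL-Library.Extended_Real"
begin

text \<open>Conventions: files are indexed by i < k (0-based), servers by l < n (0-based),
  recovery sets of file i by j < t i.  The generator matrix is Gm :: nat => nat => 'a,
  entry Gm r c for row r < k and column c < n, over a finite field 'a (so |'a| = q is
  a prime power).\<close>

definition generator_matrix :: "nat \<Rightarrow> nat \<Rightarrow> (nat \<Rightarrow> nat \<Rightarrow> 'a::field) \<Rightarrow> bool" where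
  "generator_matrix k n Gm \<longleftrightarrow>
     (\<forall>c::nat\<Rightarrow>'a. (\<forall>l<n. (\<Sum>r<k. c r * Gm r l) = 0) \<longrightarrow> (\<forall>r<k. c r = 0))"

definition is_recovery_set :: "nat \<Rightarrow> nat \<Rightarrow> (nat \<Rightarrow> nat \<Rightarrow> 'a::field) \<Rightarrow> nat \<Rightarrow> nat set \<Rightarrow> bool" where
  "is_recovery_set k n Gm i R \<longleftrightarrow> R \<subseteq> {..<n} \<and>
     (\<exists>\<alpha>::nat\<Rightarrow>'a. (\<forall>l\<in>R. \<alpha> l \<noteq> 0) \<and>
        (\<forall>r<k. (\<Sum>l\<in>R. \<alpha> l * Gm r l) = (if r = i then 1 else 0)))"

definition service_rate_region ::
  "nat \<Rightarrow> nat \<Rightarrow> (nat \<Rightarrow> nat) \<Rightarrow> (nat \<Rightarrow> nat \<Rightarrow> nat set) \<Rightarrow> (nat \<Rightarrow> real) set" where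
  "service_rate_region k n t R = {lam. \<exists>lij::nat\<Rightarrow>nat\<Rightarrow>real.
      (\<forall>i<k. \<forall>j<t i. lij i j \<ge> 0) \<and>
      (\<forall>i<k. (\<Sum>j<t i. lij i j) = lam i) \<and>
      (\<forall>l<n. (\<Sum>i<k. \<Sum>j\<in>{j. j < t i \<and> l \<in> R i j}. lij i j) \<le> 1)}"

definition service_capacity ::
  "nat \<Rightarrow> nat \<Rightarrow> (nat \<Rightarrow> nat) \<Rightarrow> (nat \<Rightarrow> nat \<Rightarrow> nat set) \<Rightarrow> real" where
  "service_capacity k n t R =
     (GREATEST s. \<exists>lam\<in>service_rate_region k n t R. s = (\<Sum>i<k. lam i))"

text \<open>Graph representation: vertices are servers Inl l (l < n) and dummy vertices
  Inr (i,j) for recovery sets of size 1; edges are indexed by (i,j).\<close>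
type_synonym vtx = "nat + (nat \<times> nat)"

definition gr_edges :: "nat \<Rightarrow> (nat \<Rightarrow> nat) \<Rightarrow> (nat \<times> nat) set" where
  "gr_edges k t = {(i,j). i < k \<and> j < t i}"

definition gr_ends :: "(nat \<Rightarrow> nat \<Rightarrow> nat set) \<Rightarrow> nat \<times> nat \<Rightarrow> vtx set" where
  "gr_ends R e = Inl ` R (fst e) (snd e) \<union> (if card (R (fst e) (snd e)) = 1 then {Inr e} else {})"

definition gr_vertices :: "nat \<Rightarrow> nat \<Rightarrow> (nat \<Rightarrow> nat) \<Rightarrow> (nat \<Rightarrow> nat \<Rightarrow> nat set) \<Rightarrow> vtx set" where
  "gr_vertices k n t R = Inl ` {..<n} \<union> {Inr e | e. e \<in> gr_edges k t \<and> card (R (fst e) (snd e)) = 1}"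

definition is_matching :: "nat \<Rightarrow> (nat \<Rightarrow> nat) \<Rightarrow> (nat \<Rightarrow> nat \<Rightarrow> nat set) \<Rightarrow> (nat \<times> nat) set \<Rightarrow> bool" where
  "is_matching k t R M \<longleftrightarrow> M \<subseteq> gr_edges k t \<and>
     (\<forall>e\<in>M. \<forall>e'\<in>M. e \<noteq> e' \<longrightarrow> gr_ends R e \<inter> gr_ends R e' = {})"

definition matching_number :: "nat \<Rightarrow> (nat \<Rightarrow> nat) \<Rightarrow> (nat \<Rightarrow> nat \<Rightarrow> nat set) \<Rightarrow> nat" where
  "matching_number k t R = Max {card M | M. is_matching k t R M}"

definition is_fractional_matching ::
  "nat \<Rightarrow> nat \<Rightarrow> (nat \<Rightarrow> nat) \<Rightarrow> (nat \<Rightarrow> nat \<Rightarrow> nat set) \<Rightarrow> (nat \<times> nat \<Rightarrow> real) \<Rightarrow> bool" where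
  "is_fractional_matching k n t R x \<longleftrightarrow>
     (\<forall>e\<in>gr_edges k t. 0 \<le> x e \<and> x e \<le> 1) \<and>
     (\<forall>v\<in>gr_vertices k n t R. (\<Sum>e\<in>{e\<in>gr_edges k t. v \<in> gr_ends R e}. x e) \<le> 1)"

definition fractional_matching_number ::
  "nat \<Rightarrow> nat \<Rightarrow> (nat \<Rightarrow> nat) \<Rightarrow> (nat \<Rightarrow> nat \<Rightarrow> nat set) \<Rightarrow> real" where
  "fractional_matching_number k n t R =
     (GREATEST s. \<exists>x. is_fractional_matching k n t R x \<and> s = (\<Sum>e\<in>gr_edges k t. x e))"

definition is_vertex_cover ::
  "nat \<Rightarrow> nat \<Rightarrow> (nat \<Rightarrow> nat) \<Rightarrow> (nat \<Rightarrow> nat \<Rightarrow> nat set) \<Rightarrow> vtx set \<Rightarrow> bool" where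
  "is_vertex_cover k n t R C \<longleftrightarrow> C \<subseteq> gr_vertices k n t R \<and>
     (\<forall>e\<in>gr_edges k t. gr_ends R e \<inter> C \<noteq> {})"

definition vertex_cover_number :: "nat \<Rightarrow> nat \<Rightarrow> (nat \<Rightarrow> nat) \<Rightarrow> (nat \<Rightarrow> nat \<Rightarrow> nat set) \<Rightarrow> nat" where
  "vertex_cover_number k n t R = Min {card C | C. is_vertex_cover k n t R C}"

end

theory Submission
  imports Defs "HOL-Analysis.Analysis"
begin

lemma gr_edges_Sigma: "gr_edges k t = Sigma {..<k} (\<lambda>i. {..<t i})"
  by (auto simp: gr_edges_def)

lemma finite_gr_edges: "finite (gr_edges k t)"
  by (simp add: gr_edges_Sigma)

lemma sum_edges: "sum x (gr_edges k t) = (\<Sum>i<k. \<Sum>j<t i. x (i,j))"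
  by (simp add: gr_edges_Sigma sum.Sigma)

lemma Inl_in_ends: "Inl l \<in> gr_ends R e \<longleftrightarrow> l \<in> R (fst e) (snd e)"
  by (auto simp: gr_ends_def)

lemma Inr_in_ends: "Inr e0 \<in> gr_ends R e \<longleftrightarrow> e0 = e \<and> card (R (fst e) (snd e)) = 1"
  by (auto simp: gr_ends_def)

lemma sum_Inl: "sum x {e\<in>gr_edges k t. Inl l \<in> gr_ends R e}
   = (\<Sum>i<k. \<Sum>j\<in>{j. j < t i \<and> l \<in> R i j}. x (i,j))"
proof -
  have "{e\<in>gr_edges k t. Inl l \<in> gr_ends R e} = Sigma {..<k} (\<lambda>i. {j. j < t i \<and> l \<in> R i j})"
    by (auto simp: gr_edges_def Inl_in_ends)
  then show ?thesis by (simp add: sum.Sigma)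
qed

lemma gr_vertices_finite: "finite (gr_vertices k n t R)"
proof -
  have "gr_vertices k n t R \<subseteq> Inl ` {..<n} \<union> Inr ` gr_edges k t"
    by (auto simp: gr_vertices_def)
  then show ?thesis using finite_gr_edges by (meson finite_Un finite_imageI finite_lessThan finite_subset)
qed

lemma fm_attains:
  "\<exists>x. is_fractional_matching k n t R x \<and>
      (\<forall>y. is_fractional_matching k n t R y \<longrightarrow> sum y (gr_edges k t) \<le> sum x (gr_edges k t))"
proof -
  define E where "E = gr_edges k t"
  define V where "V = gr_vertices k n t R"
  define S where "S = (\<lambda>v. {e\<in>E. v \<in> gr_ends R e})"
  define B :: "nat \<times> nat \<Rightarrow> real set" where "B = (\<lambda>e. if e \<in> E then {0..1} else {0})"
  define K where "K = PiE UNIV B"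
  define F where "F = K \<inter> (\<Inter>v\<in>V. {x. sum x (S v) \<le> 1})"
  have "compactin (product_topology (\<lambda>_. euclidean) UNIV) K"
    unfolding K_def by (subst compactin_PiE) (auto simp: B_def)
  then have cK: "compact K" by (simp add: euclidean_product_topology)
  have cont: "continuous_on UNIV (\<lambda>x::nat\<times>nat\<Rightarrow>real. sum x A)" for A
    by (intro continuous_on_sum) simp
  have "closed (\<Inter>v\<in>V. {x::nat\<times>nat\<Rightarrow>real. sum x (S v) \<le> 1})"
    by (intro closed_INT ballI closed_Collect_le cont continuous_on_const)
  then have cF: "compact F" unfolding F_def using compact_Int_closed[OF cK] by blast
  have "(\<lambda>_. 0) \<in> F" by (auto simp: F_def K_def B_def)
  then have "F \<noteq> {}" by blast
  from continuous_attains_sup[OF cF this cont[THEN continuous_on_subset]]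
  obtain x where xF: "x \<in> F" and xmax: "\<And>y. y \<in> F \<Longrightarrow> sum y E \<le> sum x E"
    by blast
  have SE: "S v \<subseteq> E" for v by (auto simp: S_def)
  have frac: "is_fractional_matching k n t R y" if yF: "y \<in> F" for y
  proof -
    have "y e \<in> B e" for e using yF unfolding F_def K_def PiE_iff by blast
    then have yB: "y e \<in> B e" for e .
    have "0 \<le> y e \<and> y e \<le> 1" if "e \<in> E" for e
      using yB[of e] that unfolding B_def by simp
    then have "\<forall>e\<in>E. 0 \<le> y e \<and> y e \<le> 1" by blast
    moreover have "\<forall>v\<in>V. sum y (S v) \<le> 1" using yF by (auto simp: F_def)
    ultimately show ?thesis unfolding is_fractional_matching_def E_def V_def S_def by blast
  qed
  show ?thesis
  proof (intro exI conjI allI impI)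
    show "is_fractional_matching k n t R x" using frac xF .
    fix y assume y: "is_fractional_matching k n t R y"
    define y' where "y' = (\<lambda>e. if e \<in> E then y e else 0)"
    have "y' \<in> F"
    proof -
      have s: "sum y' (S v) = sum y (S v)" for v
        using SE by (intro sum.cong) (auto simp: y'_def)
      have yb: "\<forall>e\<in>E. 0 \<le> y e \<and> y e \<le> 1" and yv: "\<forall>v\<in>V. sum y (S v) \<le> 1"
        using y unfolding is_fractional_matching_def E_def V_def S_def by blast+
      have "y' \<in> K" using yb by (auto simp: K_def B_def y'_def)
      moreover have "y' \<in> (\<Inter>v\<in>V. {x. sum x (S v) \<le> 1})" using yv s by auto
      ultimately show ?thesis by (simp add: F_def)
    qed
    moreover have "sum y' E = sum y E" by (intro sum.cong) (auto simp: y'_def)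
    ultimately show "sum y (gr_edges k t) \<le> sum x (gr_edges k t)"
      using xmax unfolding E_def by metis
  qed
qed


lemma vals_eq:
  assumes wf: "\<And>i j. i < k \<Longrightarrow> j < t i \<Longrightarrow> R i j \<noteq> {} \<and> R i j \<subseteq> {..<n}"
  shows "(\<exists>lam\<in>service_rate_region k n t R. s = (\<Sum>i<k. lam i)) \<longleftrightarrow>
         (\<exists>x. is_fractional_matching k n t R x \<and> s = sum x (gr_edges k t))"
proof
  assume "\<exists>lam\<in>service_rate_region k n t R. s = (\<Sum>i<k. lam i)"
  then obtain lam lij where nn: "\<forall>i<k. \<forall>j<t i. lij i j \<ge> 0"
    and lam: "\<forall>i<k. (\<Sum>j<t i. lij i j) = lam i"
    and srv: "\<forall>l<n. (\<Sum>i<k. \<Sum>j\<in>{j. j < t i \<and> l \<in> R i j}. lij i j) \<le> 1"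
    and s: "s = (\<Sum>i<k. lam i)"
    unfolding service_rate_region_def by blast
  define x where "x = (\<lambda>e. lij (fst e) (snd e))"
  have xl: "sum x {e\<in>gr_edges k t. Inl l \<in> gr_ends R e} \<le> 1" if "l < n" for l
    using srv that by (simp add: sum_Inl x_def)
  have bnd: "0 \<le> x e \<and> x e \<le> 1" if e: "e \<in> gr_edges k t" for e
  proof -
    obtain i j where ij: "e = (i,j)" "i < k" "j < t i" using e by (auto simp: gr_edges_def)
    then obtain l where l: "l \<in> R i j" "l < n" using wf[of i j] by blast
    have "x e = sum x {e}" by simp
    also have "\<dots> \<le> sum x {e\<in>gr_edges k t. Inl l \<in> gr_ends R e}"
    proof (rule sum_mono2)
      show "finite {e \<in> gr_edges k t. Inl l \<in> gr_ends R e}" using finite_gr_edges by simp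
      show "{e} \<subseteq> {e \<in> gr_edges k t. Inl l \<in> gr_ends R e}" using e ij l by (simp add: Inl_in_ends)
      show "0 \<le> x b" if "b \<in> {e \<in> gr_edges k t. Inl l \<in> gr_ends R e} - {e}" for b
        using that nn by (auto simp: gr_edges_def x_def)
    qed
    also have "\<dots> \<le> 1" using xl l by blast
    finally show ?thesis using nn ij by (simp add: x_def)
  qed
  have "is_fractional_matching k n t R x"
    unfolding is_fractional_matching_def
  proof (intro conjI ballI)
    fix e assume "e \<in> gr_edges k t" then show "0 \<le> x e" "x e \<le> 1" using bnd by auto
  next
    fix v assume v: "v \<in> gr_vertices k n t R"
    show "sum x {e \<in> gr_edges k t. v \<in> gr_ends R e} \<le> 1"
    proof (cases v)
      case (Inl l) then show ?thesis using v xl by (auto simp: gr_vertices_def)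
    next
      case (Inr e0)
      then have e0: "e0 \<in> gr_edges k t" "card (R (fst e0) (snd e0)) = 1" using v
        by (auto simp: gr_vertices_def)
      then have "{e \<in> gr_edges k t. v \<in> gr_ends R e} = {e0}" using Inr by (auto simp: Inr_in_ends)
      then show ?thesis using bnd e0 by simp
    qed
  qed
  moreover have "s = sum x (gr_edges k t)" using s lam by (simp add: sum_edges x_def)
  ultimately show "\<exists>x. is_fractional_matching k n t R x \<and> s = sum x (gr_edges k t)" by blast
next
  assume "\<exists>x. is_fractional_matching k n t R x \<and> s = sum x (gr_edges k t)"
  then obtain x where fm: "is_fractional_matching k n t R x" and s: "s = sum x (gr_edges k t)" by blast
  define lij where "lij = (\<lambda>i j. x (i,j))"
  define lam where "lam = (\<lambda>i. \<Sum>j<t i. lij i j)"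
  have "lam \<in> service_rate_region k n t R"
    unfolding service_rate_region_def
  proof (intro CollectI exI conjI allI impI)
    fix i j assume "i < k" "j < t i"
    then show "0 \<le> lij i j" using fm by (auto simp: is_fractional_matching_def gr_edges_def lij_def)
  next
    fix i show "(\<Sum>j<t i. lij i j) = lam i" by (simp add: lam_def)
  next
    fix l assume l: "l < n"
    then have "Inl l \<in> gr_vertices k n t R" by (simp add: gr_vertices_def)
    then have "sum x {e\<in>gr_edges k t. Inl l \<in> gr_ends R e} \<le> 1"
      using fm by (simp add: is_fractional_matching_def)
    then show "(\<Sum>i<k. \<Sum>j\<in>{j. j < t i \<and> l \<in> R i j}. lij i j) \<le> 1"
      by (simp add: sum_Inl lij_def)
  qed
  moreover have "s = (\<Sum>i<k. lam i)" using s by (simp add: sum_edges lam_def lij_def)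
  ultimately show "\<exists>lam\<in>service_rate_region k n t R. s = (\<Sum>i<k. lam i)" by blast
qed


theorem theorem2:
  fixes Gm :: "nat \<Rightarrow> nat \<Rightarrow> 'a::{finite,field}"
    and k n :: nat and t :: "nat \<Rightarrow> nat" and R :: "nat \<Rightarrow> nat \<Rightarrow> nat set"
  assumes "generator_matrix k n Gm"
    and "\<forall>i<k. t i \<ge> 1"
    and "\<forall>i<k. \<forall>j<t i. is_recovery_set k n Gm i (R i j)"
    and "\<forall>i<k. \<forall>j<t i. card (R i j) = 1 \<or> card (R i j) = 2"
  shows "real (matching_number k t R) \<le> service_capacity k n t R
       \<and> service_capacity k n t R = fractional_matching_number k n t R
       \<and> fractional_matching_number k n t R \<le> real (vertex_cover_number k n t R)"
proof -
  have wf: "R i j \<noteq> {} \<and> R i j \<subseteq> {..<n} \<and> finite (R i j)" if "i < k" "j < t i" for i j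
  proof -
    have "card (R i j) = 1 \<or> card (R i j) = 2" using assms(4) that by blast
    then have "card (R i j) \<noteq> 0" by linarith
    moreover have "R i j \<subseteq> {..<n}" using assms(3) that by (simp add: is_recovery_set_def)
    ultimately show ?thesis by (auto simp: card_eq_0_iff)
  qed
  define E where "E = gr_edges k t"
  have finE: "finite E" by (simp add: E_def finite_gr_edges)
  obtain x where xfm: "is_fractional_matching k n t R x"
    and xmax: "\<And>y. is_fractional_matching k n t R y \<Longrightarrow> sum y E \<le> sum x E"
    using fm_attains[of k n t R] unfolding E_def by blast
  have mf: "fractional_matching_number k n t R = sum x E"
    unfolding fractional_matching_number_def E_def
    by (rule Greatest_equality) (use xfm xmax E_def in auto)
  have sc: "service_capacity k n t R = fractional_matching_number k n t R"
    unfolding service_capacity_def fractional_matching_number_def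
    using vals_eq[of k t R n] wf by simp
  have xnn: "0 \<le> x e" if "e \<in> E" for e using xfm that by (simp add: is_fractional_matching_def E_def)
  have xv: "sum x {e\<in>E. v \<in> gr_ends R e} \<le> 1" if "v \<in> gr_vertices k n t R" for v
    using xfm that by (simp add: is_fractional_matching_def E_def)
  have m: "real (matching_number k t R) \<le> sum x E"
  proof -
    let ?S = "{card M | M. is_matching k t R M}"
    have "?S \<subseteq> card ` Pow E" by (auto simp: is_matching_def E_def)
    then have "finite ?S" using finE by (meson finite_Pow_iff finite_imageI finite_subset)
    moreover have "?S \<noteq> {}" using is_matching_def[of k t R "{}"] by auto
    ultimately have "Max ?S \<in> ?S" by (rule Max_in)
    then obtain M where M: "is_matching k t R M" "matching_number k t R = card M"
      unfolding matching_number_def by auto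
    have ME: "M \<subseteq> E" using M by (simp add: is_matching_def E_def)
    define y where "y = (\<lambda>e. if e \<in> M then 1 else (0::real))"
    have sumy: "sum y A = real (card (A \<inter> M))" if "finite A" for A
      using that by (simp add: y_def sum.If_cases)
    have "is_fractional_matching k n t R y"
      unfolding is_fractional_matching_def
    proof (intro conjI ballI)
      fix e show "0 \<le> y e" "y e \<le> 1" by (auto simp: y_def)
    next
      fix v
      have fin: "finite {e \<in> gr_edges k t. v \<in> gr_ends R e}" using finE by (simp add: E_def)
      have "card ({e \<in> gr_edges k t. v \<in> gr_ends R e} \<inter> M) \<le> Suc 0"
      proof (subst card_le_Suc0_iff_eq)
        show "finite ({e \<in> gr_edges k t. v \<in> gr_ends R e} \<inter> M)" using fin by simp
        have d: "\<forall>e\<in>M. \<forall>e'\<in>M. e \<noteq> e' \<longrightarrow> gr_ends R e \<inter> gr_ends R e' = {}"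
          using M(1) by (simp add: is_matching_def)
        show "\<forall>a\<in>{e \<in> gr_edges k t. v \<in> gr_ends R e} \<inter> M.
                \<forall>b\<in>{e \<in> gr_edges k t. v \<in> gr_ends R e} \<inter> M. a = b"
        proof (intro ballI, rule ccontr)
          fix a b assume "a \<in> {e \<in> gr_edges k t. v \<in> gr_ends R e} \<inter> M"
            "b \<in> {e \<in> gr_edges k t. v \<in> gr_ends R e} \<inter> M" "a \<noteq> b"
          then show False using d by blast
        qed
      qed
      then show "sum y {e \<in> gr_edges k t. v \<in> gr_ends R e} \<le> 1"
        using sumy[OF fin] by simp
    qed
    then have "sum y E \<le> sum x E" by (rule xmax)
    moreover have "sum y E = real (card M)" using sumy[OF finE] ME by (simp add: Int_absorb1)
    ultimately show ?thesis using M by simp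
  qed
  have v: "sum x E \<le> real (vertex_cover_number k n t R)"
  proof -
    define V where "V = gr_vertices k n t R"
    have finV: "finite V" by (simp add: V_def gr_vertices_finite)
    have endsV: "gr_ends R e \<subseteq> V" "gr_ends R e \<noteq> {}" "finite (gr_ends R e)" if eE: "e \<in> E" for e
    proof -
      obtain i j where ij: "e = (i,j)" "i < k" "j < t i" using eE by (auto simp: gr_edges_def E_def)
      show "gr_ends R e \<subseteq> V" using wf[OF ij(2,3)] ij eE
        by (auto simp: gr_ends_def V_def gr_vertices_def E_def)
      show "gr_ends R e \<noteq> {}" using wf[OF ij(2,3)] ij by (auto simp: gr_ends_def)
      show "finite (gr_ends R e)" using wf[OF ij(2,3)] ij by (auto simp: gr_ends_def)
    qed
    let ?S = "{card C | C. is_vertex_cover k n t R C}"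
    have "?S \<subseteq> card ` Pow V" by (auto simp: is_vertex_cover_def V_def)
    then have "finite ?S" using finV by (meson finite_Pow_iff finite_imageI finite_subset)
    moreover have "is_vertex_cover k n t R V"
      using endsV by (auto simp: is_vertex_cover_def V_def E_def Int_absorb2)
    then have "?S \<noteq> {}" by auto
    ultimately have "Min ?S \<in> ?S" by (rule Min_in)
    then obtain C where C: "is_vertex_cover k n t R C" "vertex_cover_number k n t R = card C"
      unfolding vertex_cover_number_def by auto
    have CV: "C \<subseteq> V" using C by (simp add: is_vertex_cover_def V_def)
    have finC: "finite C" using CV finV finite_subset by blast
    have "sum x E \<le> (\<Sum>e\<in>E. \<Sum>v\<in>C. if v \<in> gr_ends R e then x e else 0)"
    proof (rule sum_mono)
      fix e assume e: "e \<in> E"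
      then obtain v0 where v0: "v0 \<in> C" "v0 \<in> gr_ends R e"
        using C by (auto simp: is_vertex_cover_def E_def)
      have "x e = (if v0 \<in> gr_ends R e then x e else 0)" using v0 by simp
      also have "\<dots> \<le> (\<Sum>v\<in>C. if v \<in> gr_ends R e then x e else 0)"
        by (rule member_le_sum) (use v0 finC xnn e in auto)
      finally show "x e \<le> (\<Sum>v\<in>C. if v \<in> gr_ends R e then x e else 0)" .
    qed
    also have "\<dots> = (\<Sum>v\<in>C. \<Sum>e\<in>E. if v \<in> gr_ends R e then x e else 0)"
      by (rule sum.swap)
    also have "\<dots> = (\<Sum>v\<in>C. sum x {e\<in>E. v \<in> gr_ends R e})"
      using finE by (simp add: sum.inter_filter)
    also have "\<dots> \<le> (\<Sum>v\<in>C. 1)"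
      by (rule sum_mono) (use xv CV V_def in auto)
    also have "\<dots> = real (card C)" by simp
    finally show ?thesis using C by simp
  qed
  show ?thesis using m v mf sc by simp
qed

end
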